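(* Let $s\ge1$, let $P_0(\xi)$ be an $s$-hypoelliptic polynomial on $\mathbb{R}^d$ of order $m$, and let $P_0,P_1,\dots,P_r$ be a basis of the (finite-dimensional) vector space of polynomials weaker than $P_0$. Let $P=\sum_{j=0}^rc_j(x)P_j(D/2\pi)$ with symbol $p(x,\xi)=\sum_{j=0}^rc_j(x)P_j(\xi)$, where $c_j\in G^1_{ap}(\mathbb{R}^d)$ for $j=0,\dots,r$, and assume there exist $\epsilon>0$, $A\ge0$ such that $|p(x,\xi)|\ge\epsilon|P_0(\xi)|$ for all $|\xi|\ge A$ and $x\in\mathbb{R}^d$. Then $P$ has constant strength.
   Context: $D=-i\nabla$, so $P_j(D/2\pi)$ is the constant-coefficient differential operator whose symbol (with respect to $e^{2\pi i x\cdot\xi}$) is $P_j(\xi)$. A polynomial $Q(\xi)$ on $\mathbb{R}^d$ is $s$-hypoelliptic ($1\le s<\infty$) if for some $\rho$ with $0<\rho\le1$, $\rho\ge1/s$, and constants $C>0$, $A\ge0$: $|\partial^\beta Q(\xi)|\le C|Q(\xi)|(1+|\xi|)^{-\rho|\beta|}$ for all $\beta\in\mathbb{N}^d$ and $|\xi|\ge A$. For a polynomial $Q$ set $\tilde Q(\xi)=(\sum_{\alpha\in\mathbb{N}^d}|\partial^\alpha Q(\xi)|^2)^{1/2}$. $Q$ is weaker than $P$ if $\tilde Q(\xi)\le C\tilde P(\xi)$ for all $\xi$ and some $C>0$; $P,Q$ are equally strong if each is weaker than the other. A differential operator with symbol $p(x,\xi)$ has constant strength if $p(x,\cdot)$ and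 $p(y,\cdot)$ are equally strong for all $x,y\in\mathbb{R}^d$. $G^1_{ap}(\mathbb{R}^d)$ is the set of $f\in C^\infty(\mathbb{R}^d)$ such that every $\partial^\alpha f$ is (Bohr) uniformly almost periodic and for some $C>0$, $|\partial^\alpha f(x)|\le C^{1+|\alpha|}\alpha!$ for all $x\in\mathbb{R}^d$, $\alpha\in\mathbb{N}^d$. *)

theory Defs
  imports "HOL-Analysis.Analysis"
begin

text \<open>Polynomials on R^d (d = CARD('d)) with complex coefficients, represented by their
coefficient function on multi-indices. The variable is xi :: real^'d.\<close>

type_synonym 'd mindex = "'d \<Rightarrow> nat"
type_synonym 'd mpoly = "'d mindex \<Rightarrow> complex"

definition is_mpoly :: "('d::finite) mpoly \<Rightarrow> bool" where
  "is_mpoly a \<longleftrightarrow> finite {\<alpha>. a \<alpha> \<noteq> 0}"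

definition mindex_abs :: "('d::finite) mindex \<Rightarrow> nat" where
  "mindex_abs \<alpha> = (\<Sum>i\<in>UNIV. \<alpha> i)"

definition mindex_fact :: "('d::finite) mindex \<Rightarrow> real" where
  "mindex_fact \<alpha> = (\<Prod>i\<in>UNIV. fact (\<alpha> i))"

definition mpdegree :: "('d::finite) mpoly \<Rightarrow> nat" where
  "mpdegree a = Max (insert 0 (mindex_abs ` {\<alpha>. a \<alpha> \<noteq> 0}))"

definition mpeval :: "('d::finite) mpoly \<Rightarrow> real^'d \<Rightarrow> complex" where
  "mpeval a \<xi> = (\<Sum>\<alpha>\<in>{\<alpha>. a \<alpha> \<noteq> 0}. a \<alpha> * (\<Prod>i\<in>UNIV. complex_of_real ((\<xi> $ i) ^ \<alpha> i)))"

definition mpderiv :: "('d::finite) mindex \<Rightarrow> 'd mpoly \<Rightarrow> 'd mpoly" where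
  "mpderiv \<beta> a = (\<lambda>\<alpha>. of_nat (\<Prod>i\<in>UNIV. fact (\<alpha> i + \<beta> i) div fact (\<alpha> i)) * a (\<lambda>i. \<alpha> i + \<beta> i))"

text \<open>tilde Q(xi) = (sum over all beta of |d^beta Q(xi)|^2)^(1/2); only finitely many beta give a
nonzero derivative polynomial, the others contribute 0.\<close>
definition mptilde :: "('d::finite) mpoly \<Rightarrow> real^'d \<Rightarrow> real" where
  "mptilde a \<xi> = sqrt (\<Sum>\<beta>\<in>{\<beta>. mpderiv \<beta> a \<noteq> (\<lambda>_. 0)}. (cmod (mpeval (mpderiv \<beta> a) \<xi>))\<^sup>2)"

definition weaker :: "('d::finite) mpoly \<Rightarrow> 'd mpoly \<Rightarrow> bool" where
  "weaker Q P \<longleftrightarrow> (\<exists>C>0. \<forall>\<xi>. mptilde Q \<xi> \<le> C * mptilde P \<xi>)"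

definition equally_strong :: "('d::finite) mpoly \<Rightarrow> 'd mpoly \<Rightarrow> bool" where
  "equally_strong P Q \<longleftrightarrow> weaker P Q \<and> weaker Q P"

definition s_hypoelliptic :: "real \<Rightarrow> ('d::finite) mpoly \<Rightarrow> bool" where
  "s_hypoelliptic s Q \<longleftrightarrow> (\<exists>\<rho> C A. 0 < \<rho> \<and> \<rho> \<le> 1 \<and> \<rho> \<ge> 1 / s \<and> C > 0 \<and> A \<ge> 0 \<and>
     (\<forall>\<beta> \<xi>. norm \<xi> \<ge> A \<longrightarrow>
        cmod (mpeval (mpderiv \<beta> Q) \<xi>) \<le> C * cmod (mpeval Q \<xi>) * (1 + norm \<xi>) powr (- \<rho> * real (mindex_abs \<beta>))))"

definition partial_dir :: "'d::finite \<Rightarrow> (real^'d \<Rightarrow> complex) \<Rightarrow> real^'d \<Rightarrow> complex" where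
  "partial_dir i f x = vector_derivative (\<lambda>t. f (x + t *\<^sub>R axis i 1)) (at 0)"

definition iter_partial :: "('d::finite) list \<Rightarrow> (real^'d \<Rightarrow> complex) \<Rightarrow> real^'d \<Rightarrow> complex" where
  "iter_partial ds f = foldr partial_dir ds f"

definition smooth_fun :: "(real^('d::finite) \<Rightarrow> complex) \<Rightarrow> bool" where
  "smooth_fun f \<longleftrightarrow> (\<forall>ds. iter_partial ds f differentiable_on UNIV \<and> continuous_on UNIV (iter_partial ds f))"

text \<open>\<partial>^\<alpha> f: iterated partials in any order with multiplicities \<alpha> (order irrelevant for smooth f).\<close>
definition dpow :: "('d::finite) mindex \<Rightarrow> (real^'d \<Rightarrow> complex) \<Rightarrow> real^'d \<Rightarrow> complex" where
  "dpow \<alpha> f = iter_partial (SOME ds. \<forall>i. count_list ds i = \<alpha> i) f"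

definition almost_periodic :: "(real^('d::finite) \<Rightarrow> complex) \<Rightarrow> bool" where
  "almost_periodic f \<longleftrightarrow> continuous_on UNIV f \<and>
     (\<forall>\<epsilon>>0. \<exists>L>0. \<forall>a. \<exists>\<tau>. dist \<tau> a \<le> L \<and> (\<forall>x. cmod (f (x + \<tau>) - f x) < \<epsilon>))"

definition G1ap :: "(real^('d::finite) \<Rightarrow> complex) set" where
  "G1ap = {f. smooth_fun f \<and> (\<forall>\<alpha>. almost_periodic (dpow \<alpha> f)) \<and>
     (\<exists>C>0. \<forall>\<alpha> x. cmod (dpow \<alpha> f x) \<le> C ^ (1 + mindex_abs \<alpha>) * mindex_fact \<alpha>)}"

definition symbol :: "nat \<Rightarrow> (nat \<Rightarrow> real^('d::finite) \<Rightarrow> complex) \<Rightarrow> (nat \<Rightarrow> 'd mpoly) \<Rightarrow> real^'d \<Rightarrow> 'd mpoly" where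
  "symbol r c Ps x = (\<lambda>\<alpha>. \<Sum>j\<le>r. c j x * Ps j \<alpha>)"

definition constant_strength :: "(real^('d::finite) \<Rightarrow> 'd mpoly) \<Rightarrow> bool" where
  "constant_strength p \<longleftrightarrow> (\<forall>x y. equally_strong (p x) (p y))"

end

theory Submission imports Defs begin

definition Dset :: "('d::finite) mpoly \<Rightarrow> 'd mindex set" where
  "Dset a = {\<beta>. mpderiv \<beta> a \<noteq> (\<lambda>_. 0)}"

definition supp :: "('d::finite) mpoly \<Rightarrow> 'd mindex set" where
  "supp a = {\<alpha>. a \<alpha> \<noteq> 0}"

lemma mpderiv0: "mpderiv (\<lambda>_. 0) a = a"
  by (simp add: mpderiv_def)

lemma mpderiv_lin:
  "mpderiv \<beta> (\<lambda>\<alpha>. \<Sum>j\<in>J. f j * P j \<alpha>) = (\<lambda>\<alpha>. \<Sum>j\<in>J. f j * mpderiv \<beta> (P j) \<alpha>)"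
  by (simp add: mpderiv_def sum_distrib_left sum_distrib_right mult_ac)

lemma is_mpoly_deriv:
  assumes "is_mpoly a" shows "is_mpoly (mpderiv \<beta> a)"
proof -
  have inj: "inj (\<lambda>\<alpha>::'a mindex. \<lambda>i. \<alpha> i + \<beta> i)"
    by (auto simp: inj_def fun_eq_iff)
  have "{\<alpha>. mpderiv \<beta> a \<alpha> \<noteq> 0} \<subseteq> (\<lambda>\<alpha> i. \<alpha> i + \<beta> i) -` {\<alpha>. a \<alpha> \<noteq> 0}"
    by (auto simp: mpderiv_def)
  moreover have "finite ((\<lambda>\<alpha> i. \<alpha> i + \<beta> i) -` {\<alpha>. a \<alpha> \<noteq> 0})"
    using assms inj unfolding is_mpoly_def by (intro finite_vimageI) auto
  ultimately show ?thesis unfolding is_mpoly_def by (rule finite_subset)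
qed

lemma mpeval_sup:
  assumes "finite T" "{\<alpha>. a \<alpha> \<noteq> 0} \<subseteq> T"
  shows "mpeval a \<xi> = (\<Sum>\<alpha>\<in>T. a \<alpha> * (\<Prod>i\<in>UNIV. complex_of_real ((\<xi> $ i) ^ \<alpha> i)))"
  unfolding mpeval_def using assms by (intro sum.mono_neutral_left) auto

lemma mpeval_zero: "mpeval (\<lambda>_. 0) \<xi> = 0"
  by (simp add: mpeval_def)

lemma is_mpoly_lin:
  assumes "finite J" "\<forall>j\<in>J. is_mpoly (P j)"
  shows "is_mpoly (\<lambda>\<alpha>. \<Sum>j\<in>J. f j * P j \<alpha>)"
proof -
  have "{\<alpha>. (\<Sum>j\<in>J. f j * P j \<alpha>) \<noteq> 0} \<subseteq> (\<Union>j\<in>J. {\<alpha>. P j \<alpha> \<noteq> 0})"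
    by (auto intro: ccontr)
  moreover have "finite (\<Union>j\<in>J. {\<alpha>. P j \<alpha> \<noteq> 0})" using assms by (auto simp: is_mpoly_def)
  ultimately show ?thesis unfolding is_mpoly_def by (rule finite_subset)
qed

lemma mpeval_lin:
  assumes "finite J" "\<forall>j\<in>J. is_mpoly (P j)"
  shows "mpeval (\<lambda>\<alpha>. \<Sum>j\<in>J. f j * P j \<alpha>) \<xi> = (\<Sum>j\<in>J. f j * mpeval (P j) \<xi>)"
proof -
  define T where "T = (\<Union>j\<in>J. {\<alpha>. P j \<alpha> \<noteq> 0})"
  have fT: "finite T" using assms by (auto simp: is_mpoly_def T_def)
  have s1: "{\<alpha>. (\<Sum>j\<in>J. f j * P j \<alpha>) \<noteq> 0} \<subseteq> T"
    unfolding T_def by (auto intro: ccontr)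
  have "mpeval (\<lambda>\<alpha>. \<Sum>j\<in>J. f j * P j \<alpha>) \<xi> =
     (\<Sum>\<alpha>\<in>T. (\<Sum>j\<in>J. f j * P j \<alpha>) * (\<Prod>i\<in>UNIV. complex_of_real ((\<xi> $ i) ^ \<alpha> i)))"
    by (rule mpeval_sup[OF fT s1])
  also have "\<dots> = (\<Sum>j\<in>J. f j * (\<Sum>\<alpha>\<in>T. P j \<alpha> * (\<Prod>i\<in>UNIV. complex_of_real ((\<xi> $ i) ^ \<alpha> i))))"
    by (simp add: sum_distrib_right sum_distrib_left mult_ac sum.swap[of _ T J])
  also have "\<dots> = (\<Sum>j\<in>J. f j * mpeval (P j) \<xi>)"
    by (intro sum.cong refl arg_cong2[where f="(*)"] mpeval_sup[symmetric] fT) (auto simp: T_def)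
  finally show ?thesis .
qed

lemma Dset_finite:
  assumes "is_mpoly a" shows "finite (Dset a)"
proof -
  have "Dset a \<subseteq> (\<Union>\<gamma>\<in>{\<alpha>. a \<alpha> \<noteq> 0}. Pi\<^sub>E UNIV (\<lambda>i. {..\<gamma> i}))"
  proof
    fix \<beta> assume "\<beta> \<in> Dset a"
    then obtain \<alpha> where "mpderiv \<beta> a \<alpha> \<noteq> 0" by (auto simp: Dset_def fun_eq_iff)
    hence "a (\<lambda>i. \<alpha> i + \<beta> i) \<noteq> 0" by (auto simp: mpderiv_def)
    thus "\<beta> \<in> (\<Union>\<gamma>\<in>{\<alpha>. a \<alpha> \<noteq> 0}. Pi\<^sub>E UNIV (\<lambda>i. {..\<gamma> i}))"
      by (intro UN_I[of "\<lambda>i. \<alpha> i + \<beta> i"]) auto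
  qed
  moreover have "finite (\<Union>\<gamma>\<in>{\<alpha>. a \<alpha> \<noteq> 0}. Pi\<^sub>E UNIV (\<lambda>i. {..\<gamma> i}))"
    using assms by (auto simp: is_mpoly_def intro!: finite_PiE)
  ultimately show ?thesis by (rule finite_subset)
qed

lemma tilde_sup:
  assumes "finite S" "Dset a \<subseteq> S"
  shows "mptilde a \<xi> = L2_set (\<lambda>\<beta>. cmod (mpeval (mpderiv \<beta> a) \<xi>)) S"
proof -
  have "(\<Sum>\<beta>\<in>Dset a. (cmod (mpeval (mpderiv \<beta> a) \<xi>))\<^sup>2) = (\<Sum>\<beta>\<in>S. (cmod (mpeval (mpderiv \<beta> a) \<xi>))\<^sup>2)"
    using assms by (intro sum.mono_neutral_left) (auto simp: Dset_def mpeval_zero)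
  thus ?thesis by (simp add: mptilde_def L2_set_def Dset_def)
qed

lemma term_le_tilde:
  assumes "is_mpoly a" shows "cmod (mpeval (mpderiv \<beta> a) \<xi>) \<le> mptilde a \<xi>"
proof (cases "\<beta> \<in> Dset a")
  case True
  thus ?thesis using tilde_sup[OF Dset_finite[OF assms] order_refl] member_le_L2_set[OF Dset_finite[OF assms] True]
    by metis
next
  case False
  hence "mpderiv \<beta> a = (\<lambda>_. 0)" by (auto simp: Dset_def)
  thus ?thesis by (simp add: mpeval_zero mptilde_def sum_nonneg)
qed

lemma eval_le_tilde:
  assumes "is_mpoly a" shows "cmod (mpeval a \<xi>) \<le> mptilde a \<xi>"
  using term_le_tilde[OF assms, of "\<lambda>_. 0"] by (simp add: mpderiv0)

lemma tilde_nonneg: "0 \<le> mptilde a \<xi>"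
  by (simp add: mptilde_def sum_nonneg)


lemma mindex_abs_add: "mindex_abs (\<lambda>i. \<gamma> i + \<alpha> i) = mindex_abs \<gamma> + mindex_abs \<alpha>"
  by (simp add: mindex_abs_def sum.distrib)

lemma mindex_abs_pos: "\<gamma> \<noteq> (\<lambda>_. 0) \<Longrightarrow> 0 < mindex_abs (\<gamma>::('d::finite) mindex)"
proof -
  assume "\<gamma> \<noteq> (\<lambda>_. 0)"
  then obtain i where "\<gamma> i \<noteq> 0" by auto
  hence "0 < \<gamma> i" by simp
  also have "\<gamma> i \<le> mindex_abs \<gamma>" unfolding mindex_abs_def
    by (rule member_le_sum) auto
  finally show ?thesis .
qed

lemma tilde_lower:
  assumes "is_mpoly a" "a \<noteq> (\<lambda>_. 0)"
  shows "\<exists>\<kappa>>0. \<forall>\<xi>. \<kappa> \<le> mptilde a \<xi>"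
proof -
  define T where "T = {\<alpha>. a \<alpha> \<noteq> 0}"
  have fT: "finite T" using assms by (simp add: is_mpoly_def T_def)
  have neT: "T \<noteq> {}" using assms by (auto simp: T_def)
  define n where "n = Max (mindex_abs ` T)"
  have "n \<in> mindex_abs ` T" unfolding n_def using fT neT by (intro Max_in) auto
  then obtain \<alpha> where a\<alpha>: "\<alpha> \<in> T" "mindex_abs \<alpha> = n" by auto
  have mx: "\<And>\<gamma>. \<gamma> \<in> T \<Longrightarrow> mindex_abs \<gamma> \<le> n" unfolding n_def using fT by auto
  define k where "k = of_nat (\<Prod>i\<in>UNIV. fact (\<alpha> i) :: nat) * a \<alpha>"
  have k0: "k \<noteq> 0" using a\<alpha> by (simp add: k_def T_def)
  have der: "mpderiv \<alpha> a = (\<lambda>\<gamma>. if \<gamma> = (\<lambda>_. 0) then k else 0)"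
  proof
    fix \<gamma> :: "'a mindex"
    show "mpderiv \<alpha> a \<gamma> = (if \<gamma> = (\<lambda>_. 0) then k else 0)"
    proof (cases "\<gamma> = (\<lambda>_. 0)")
      case True thus ?thesis by (simp add: mpderiv_def k_def)
    next
      case False
      have "(\<lambda>i. \<gamma> i + \<alpha> i) \<notin> T"
      proof
        assume "(\<lambda>i. \<gamma> i + \<alpha> i) \<in> T"
        hence "mindex_abs (\<lambda>i. \<gamma> i + \<alpha> i) \<le> n" by (rule mx)
        thus False using mindex_abs_pos[OF False] a\<alpha>(2) by (simp add: mindex_abs_add)
      qed
      thus ?thesis using False by (simp add: mpderiv_def T_def)
    qed
  qed
  have ev: "mpeval (mpderiv \<alpha> a) \<xi> = k" for \<xi>
  proof -
    have "{\<gamma>. mpderiv \<alpha> a \<gamma> \<noteq> 0} = {(\<lambda>_. 0)}" using k0 by (auto simp: der)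
    thus ?thesis by (simp add: mpeval_def der)
  qed
  show ?thesis
    using term_le_tilde[OF assms(1), of \<alpha>] k0 by (intro exI[of _ "cmod k"]) (auto simp: ev)
qed

lemma mpeval_cont: "continuous_on UNIV (mpeval a)"
  unfolding mpeval_def by (intro continuous_intros)

lemma tilde_cont:
  assumes "is_mpoly a" shows "continuous_on UNIV (mptilde a)"
proof -
  have "mptilde a = (\<lambda>\<xi>. sqrt (\<Sum>\<beta>\<in>Dset a. (cmod (mpeval (mpderiv \<beta> a) \<xi>))\<^sup>2))"
    by (simp add: mptilde_def Dset_def fun_eq_iff)
  thus ?thesis by (simp add: mpeval_cont continuous_intros)
qed

lemma tilde_bounded:
  assumes "is_mpoly a" shows "\<exists>M. \<forall>\<xi>. norm \<xi> \<le> B \<longrightarrow> mptilde a \<xi> \<le> M"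
proof (cases "B < 0")
  case True thus ?thesis by (metis norm_ge_zero not_le order_less_le_trans)
next
  case False
  hence "cball (0::real^'a) B \<noteq> {}" by simp
  from continuous_attains_sup[OF compact_cball this continuous_on_subset[OF tilde_cont[OF assms]]]
  obtain x where "\<forall>y\<in>cball 0 B. mptilde a y \<le> mptilde a x" by auto
  hence "\<forall>\<xi>. norm \<xi> \<le> B \<longrightarrow> mptilde a \<xi> \<le> mptilde a x" by (simp add: mem_cball_0)
  thus ?thesis by blast
qed

lemma L2_sum_le:
  "L2_set (\<lambda>\<beta>. cmod (\<Sum>j\<in>J. g j \<beta>)) S \<le> (\<Sum>j\<in>J. L2_set (\<lambda>\<beta>. cmod (g j \<beta>)) S)"
proof (induction J rule: infinite_finite_induct)
  case (infinite A) thus ?case by (simp add: L2_set_def)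
next
  case empty thus ?case by (simp add: L2_set_def)
next
  case (insert x F)
  have "L2_set (\<lambda>\<beta>. cmod (\<Sum>j\<in>insert x F. g j \<beta>)) S \<le>
        L2_set (\<lambda>\<beta>. cmod (g x \<beta>) + cmod (\<Sum>j\<in>F. g j \<beta>)) S"
    using insert by (intro L2_set_mono) (auto intro: norm_triangle_ineq)
  also have "\<dots> \<le> L2_set (\<lambda>\<beta>. cmod (g x \<beta>)) S + L2_set (\<lambda>\<beta>. cmod (\<Sum>j\<in>F. g j \<beta>)) S"
    by (rule L2_set_triangle_ineq)
  also have "\<dots> \<le> (\<Sum>j\<in>insert x F. L2_set (\<lambda>\<beta>. cmod (g j \<beta>)) S)"
    using insert by simp
  finally show ?case .
qed


lemma weaker_trans: "weaker a b \<Longrightarrow> weaker b c \<Longrightarrow> weaker a c"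
  unfolding weaker_def
proof (elim exE conjE)
  fix C1 C2 assume h: "C1 > 0" "\<forall>\<xi>. mptilde a \<xi> \<le> C1 * mptilde b \<xi>" "C2 > 0" "\<forall>\<xi>. mptilde b \<xi> \<le> C2 * mptilde c \<xi>"
  have "\<forall>\<xi>. mptilde a \<xi> \<le> (C1 * C2) * mptilde c \<xi>"
  proof
    fix \<xi>
    have "mptilde a \<xi> \<le> C1 * mptilde b \<xi>" using h by auto
    also have "\<dots> \<le> C1 * (C2 * mptilde c \<xi>)" using h by (intro mult_left_mono) auto
    finally show "mptilde a \<xi> \<le> (C1 * C2) * mptilde c \<xi>" by (simp add: mult_ac)
  qed
  thus "\<exists>C>0. \<forall>\<xi>. mptilde a \<xi> \<le> C * mptilde c \<xi>" using h by (intro exI[of _ "C1*C2"]) auto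
qed

theorem mainTheorem14:
  fixes s :: real and m r :: nat
    and Ps :: "nat \<Rightarrow> ('d::finite) mpoly"
    and c :: "nat \<Rightarrow> real^'d \<Rightarrow> complex"
  assumes "s \<ge> 1"
    and "is_mpoly (Ps 0)" and "s_hypoelliptic s (Ps 0)" and "mpdegree (Ps 0) = m"
    and "\<forall>j\<le>r. is_mpoly (Ps j) \<and> weaker (Ps j) (Ps 0)"
    and "\<forall>a::nat \<Rightarrow> complex. (\<lambda>\<alpha>. \<Sum>j\<le>r. a j * Ps j \<alpha>) = (\<lambda>_. 0) \<longrightarrow> (\<forall>j\<le>r. a j = 0)"
    and "\<forall>Q. is_mpoly Q \<and> weaker Q (Ps 0) \<longrightarrow> (\<exists>a::nat \<Rightarrow> complex. Q = (\<lambda>\<alpha>. \<Sum>j\<le>r. a j * Ps j \<alpha>))"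
    and "\<forall>j\<le>r. c j \<in> G1ap"
    and "\<exists>\<epsilon>>0. \<exists>A\<ge>0. \<forall>x \<xi>. norm \<xi> \<ge> A \<longrightarrow>
           cmod (\<Sum>j\<le>r. c j x * mpeval (Ps j) \<xi>) \<ge> \<epsilon> * cmod (mpeval (Ps 0) \<xi>)"
  shows "constant_strength (symbol r c Ps)"
proof -
  define P0 where "P0 = Ps 0"
  have mpP: "\<forall>j\<in>{..r}. is_mpoly (Ps j)" using assms(5) by auto
  have mp0: "is_mpoly P0" using assms(2) by (simp add: P0_def)
  obtain \<epsilon> Ae where eps: "\<epsilon> > 0" "Ae \<ge> 0"
    "\<And>x \<xi>. norm \<xi> \<ge> Ae \<Longrightarrow> cmod (\<Sum>j\<le>r. c j x * mpeval (Ps j) \<xi>) \<ge> \<epsilon> * cmod (mpeval P0 \<xi>)"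
    using assms(9) unfolding P0_def by blast
  obtain \<rho> Ch Ah where hyp: "Ch > 0" "Ah \<ge> 0"
    "\<And>\<beta> \<xi>. norm \<xi> \<ge> Ah \<Longrightarrow> cmod (mpeval (mpderiv \<beta> P0) \<xi>) \<le> Ch * cmod (mpeval P0 \<xi>) * (1 + norm \<xi>) powr (- \<rho> * real (mindex_abs \<beta>))"
    "\<rho> > 0"
    using assms(3) unfolding s_hypoelliptic_def P0_def by blast
  define B where "B = max Ae Ah"
  define K where "K = sqrt (real (card (Dset P0))) * Ch"
  have K0: "K \<ge> 0" using hyp by (simp add: K_def)
  have hypK: "mptilde P0 \<xi> \<le> K * cmod (mpeval P0 \<xi>)" if "norm \<xi> \<ge> Ah" for \<xi>
  proof -
    have "mptilde P0 \<xi> = L2_set (\<lambda>\<beta>. cmod (mpeval (mpderiv \<beta> P0) \<xi>)) (Dset P0)"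
      by (rule tilde_sup[OF Dset_finite[OF mp0] order_refl])
    also have "\<dots> \<le> L2_set (\<lambda>\<beta>. Ch * cmod (mpeval P0 \<xi>)) (Dset P0)"
    proof (intro L2_set_mono)
      fix \<beta> :: "'d mindex"
      have "(1 + norm \<xi>) powr (- \<rho> * real (mindex_abs \<beta>)) \<le> (1 + norm \<xi>) powr 0"
        using hyp(4) by (intro powr_mono) auto
      hence "Ch * cmod (mpeval P0 \<xi>) * (1 + norm \<xi>) powr (- \<rho> * real (mindex_abs \<beta>)) \<le> Ch * cmod (mpeval P0 \<xi>) * 1"
        using hyp(1) by (intro mult_left_mono) (auto split: if_splits simp: add_nonneg_eq_0_iff)
      thus "cmod (mpeval (mpderiv \<beta> P0) \<xi>) \<le> Ch * cmod (mpeval P0 \<xi>)"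
        using hyp(3)[OF that, of \<beta>] by simp
    qed auto
    also have "\<dots> = K * cmod (mpeval P0 \<xi>)"
      using hyp(1) by (simp add: L2_set_constant K_def)
    finally show ?thesis .
  qed
  have P0nz: "P0 \<noteq> (\<lambda>_. 0)"
  proof
    assume h: "P0 = (\<lambda>_. 0)"
    have "(\<lambda>\<alpha>. \<Sum>j\<le>r. (if j = 0 then 1 else 0) * Ps j \<alpha>) = (\<lambda>_. 0)"
      proof
      fix \<alpha>
      have "(\<Sum>j\<le>r. (if j = 0 then 1 else 0) * Ps j \<alpha>) = (\<Sum>j\<le>r. if j = 0 then Ps j \<alpha> else 0)"
        by (intro sum.cong) auto
      also have "\<dots> = Ps 0 \<alpha>" by (simp add: sum.delta)
      finally show "(\<Sum>j\<le>r. (if j = 0 then 1 else 0) * Ps j \<alpha>) = 0" using h by (simp add: P0_def)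
    qed
    hence "\<forall>j\<le>r. (if j = 0 then 1 else 0 :: complex) = 0" using assms(6)[rule_format, of "\<lambda>j. if j = 0 then 1 else 0"] by simp
    thus False by (metis le0 one_neq_zero)
  qed
  obtain \<kappa>0 where k0: "\<kappa>0 > 0" "\<And>\<xi>. \<kappa>0 \<le> mptilde P0 \<xi>" using tilde_lower[OF mp0 P0nz] by blast
  have "\<forall>j. \<exists>C. j \<le> r \<longrightarrow> C > 0 \<and> (\<forall>\<xi>. mptilde (Ps j) \<xi> \<le> C * mptilde P0 \<xi>)"
    using assms(5) unfolding weaker_def P0_def by blast
  then obtain Cf where Cf: "\<And>j. j \<le> r \<Longrightarrow> Cf j > 0" "\<And>j \<xi>. j \<le> r \<Longrightarrow> mptilde (Ps j) \<xi> \<le> Cf j * mptilde P0 \<xi>"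
    by metis
  define S where "S = (\<Union>j\<le>r. Dset (Ps j))"
  have fS: "finite S" using assms(5) Dset_finite by (auto simp: S_def)
  have W: "weaker (symbol r c Ps x) P0 \<and> weaker P0 (symbol r c Ps x)" for x
  proof -
    define p where "p = symbol r c Ps x"
    have p_def': "p = (\<lambda>\<alpha>. \<Sum>j\<le>r. c j x * Ps j \<alpha>)" by (simp add: p_def symbol_def)
    have mpp: "is_mpoly p" unfolding p_def' by (rule is_mpoly_lin) (use mpP in auto)
    have evp: "mpeval p \<xi> = (\<Sum>j\<le>r. c j x * mpeval (Ps j) \<xi>)" for \<xi>
      unfolding p_def' by (rule mpeval_lin) (use mpP in auto)
    have DpS: "Dset p \<subseteq> S"
    proof
      fix \<beta> assume "\<beta> \<in> Dset p"
      hence "mpderiv \<beta> p \<noteq> (\<lambda>_. 0)" by (simp add: Dset_def)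
      hence "\<exists>j\<le>r. mpderiv \<beta> (Ps j) \<noteq> (\<lambda>_. 0)"
        unfolding p_def' mpderiv_lin by (auto intro: ccontr)
      thus "\<beta> \<in> S" by (auto simp: S_def Dset_def)
    qed
    have W1: "weaker p P0"
    proof -
      define C where "C = 1 + (\<Sum>j\<le>r. cmod (c j x) * Cf j)"
      have Cpos: "C > 0" unfolding C_def using Cf by (smt (verit) norm_ge_zero sum_nonneg mult_nonneg_nonneg less_imp_le atMost_iff)
      have "mptilde p \<xi> \<le> C * mptilde P0 \<xi>" for \<xi>
      proof -
        have "mptilde p \<xi> = L2_set (\<lambda>\<beta>. cmod (mpeval (mpderiv \<beta> p) \<xi>)) S"
          by (rule tilde_sup[OF fS DpS])
        also have "\<dots> = L2_set (\<lambda>\<beta>. cmod (\<Sum>j\<le>r. c j x * mpeval (mpderiv \<beta> (Ps j)) \<xi>)) S"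
          unfolding p_def' mpderiv_lin
          by (intro L2_set_cong refl arg_cong[where f=cmod] mpeval_lin) (use mpP is_mpoly_deriv in auto)
        also have "\<dots> \<le> (\<Sum>j\<le>r. L2_set (\<lambda>\<beta>. cmod (c j x * mpeval (mpderiv \<beta> (Ps j)) \<xi>)) S)"
          by (rule L2_sum_le)
        also have "\<dots> = (\<Sum>j\<le>r. cmod (c j x) * mptilde (Ps j) \<xi>)"
        proof (intro sum.cong refl)
          fix j assume j: "j \<in> {..r}"
          have "Dset (Ps j) \<subseteq> S" using j by (auto simp: S_def)
          thus "L2_set (\<lambda>\<beta>. cmod (c j x * mpeval (mpderiv \<beta> (Ps j)) \<xi>)) S = cmod (c j x) * mptilde (Ps j) \<xi>"
            by (simp add: tilde_sup[OF fS] L2_set_right_distrib norm_mult)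
        qed
        also have "\<dots> \<le> (\<Sum>j\<le>r. cmod (c j x) * (Cf j * mptilde P0 \<xi>))"
          by (intro sum_mono mult_left_mono Cf) auto
        also have "\<dots> = (\<Sum>j\<le>r. cmod (c j x) * Cf j) * mptilde P0 \<xi>"
          by (simp add: sum_distrib_right mult.assoc)
        also have "\<dots> \<le> C * mptilde P0 \<xi>"
          unfolding C_def by (intro mult_right_mono) (auto simp: tilde_nonneg)
        finally show ?thesis .
      qed
      thus ?thesis using Cpos unfolding weaker_def by blast
    qed
    have pnz: "p \<noteq> (\<lambda>_. 0)"
    proof
      assume h: "p = (\<lambda>_. 0)"
      obtain \<xi> :: "real^'d" where nx: "norm \<xi> = B"
        using vector_choose_size[of B] eps(2) unfolding B_def by (meson max.coboundedI1)
      have "\<epsilon> * cmod (mpeval P0 \<xi>) \<le> cmod (mpeval p \<xi>)"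
        using eps(3)[of \<xi> x] nx by (simp add: evp B_def)
      also have "\<dots> = 0" using h by (simp add: mpeval_zero)
      finally have "mpeval P0 \<xi> = 0" using eps(1)
        by (smt (verit) mult_pos_pos zero_less_norm_iff)
      hence "mptilde P0 \<xi> \<le> 0" using hypK[of \<xi>] nx by (simp add: B_def)
      thus False using k0 by (smt (verit))
    qed
    obtain \<kappa> where kp: "\<kappa> > 0" "\<And>\<xi>. \<kappa> \<le> mptilde p \<xi>" using tilde_lower[OF mpp pnz] by blast
    obtain M where M: "\<And>\<xi>. norm \<xi> \<le> B \<Longrightarrow> mptilde P0 \<xi> \<le> M" using tilde_bounded[OF mp0, of B] by blast
    have M0: "M \<ge> 0" using M[of 0] eps(2) by (smt (verit) B_def norm_zero tilde_nonneg)
    have W2: "weaker P0 p"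
    proof -
      define C where "C = K / \<epsilon> + M / \<kappa> + 1"
      have t1: "K / \<epsilon> * mptilde p \<xi> \<ge> 0" for \<xi> using K0 eps(1) by (simp add: tilde_nonneg)
      have t2: "M / \<kappa> * mptilde p \<xi> \<ge> 0" for \<xi> using M0 kp(1) by (simp add: tilde_nonneg)
      have Cpos: "C > 0" unfolding C_def using K0 eps(1) M0 kp(1) by (smt (verit) divide_nonneg_pos)
      have "mptilde P0 \<xi> \<le> C * mptilde p \<xi>" for \<xi>
      proof (cases "norm \<xi> \<ge> B")
        case True
        have "mptilde P0 \<xi> \<le> K * cmod (mpeval P0 \<xi>)" using True hypK by (simp add: B_def)
        also have "\<dots> \<le> K * (cmod (mpeval p \<xi>) / \<epsilon>)"
          using eps(3)[of \<xi> x] True K0 eps(1)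
          by (intro mult_left_mono) (auto simp: B_def evp field_simps)
        also have "\<dots> \<le> K * (mptilde p \<xi> / \<epsilon>)"
          using K0 eps(1) eval_le_tilde[OF mpp] by (intro mult_left_mono divide_right_mono) auto
        also have "\<dots> = K / \<epsilon> * mptilde p \<xi>" by simp
        also have "\<dots> \<le> C * mptilde p \<xi>" unfolding C_def using t2 tilde_nonneg[of p \<xi>]
          by (simp add: distrib_right)
        finally show ?thesis .
      next
        case False
        have "mptilde P0 \<xi> \<le> M" using False M by simp
        also have "\<dots> = M / \<kappa> * \<kappa>" using kp(1) by simp
        also have "\<dots> \<le> M / \<kappa> * mptilde p \<xi>" using M0 kp by (intro mult_left_mono) auto
        also have "\<dots> \<le> C * mptilde p \<xi>" unfolding C_def using t1 tilde_nonneg[of p \<xi>]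
          by (simp add: distrib_right)
        finally show ?thesis .
      qed
      thus ?thesis using Cpos unfolding weaker_def by blast
    qed
    show ?thesis using W1 W2 by (simp add: p_def)
  qed
  show ?thesis
    unfolding constant_strength_def equally_strong_def
    using W weaker_trans by blast
qed

end
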